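(* If $\mathbf{Y}_1\sim\mathcal{MMN}_p(\boldsymbol{\xi},\mathbf{\Omega},\boldsymbol{\delta};H)$ and $\mathbf{Y}_2\sim\mathcal{N}_p(\boldsymbol{\mu},\mathbf{\Sigma})$ are independent, then $\mathbf{Y}=\mathbf{Y}_1+\mathbf{Y}_2\sim\mathcal{MMN}_p(\boldsymbol{\xi}_{\mathbf{Y}},\mathbf{\Omega}_{\mathbf{Y}},\boldsymbol{\delta}_{\mathbf{Y}};H)$, where $\boldsymbol{\xi}_{\mathbf{Y}}=\boldsymbol{\xi}+\boldsymbol{\mu}$, $\mathbf{\Omega}_{\mathbf{Y}}=\mathbf{\Omega}+\mathbf{\Sigma}$, and $\boldsymbol{\delta}_{\mathbf{Y}}=\boldsymbol{\omega}_{\mathbf{Y}}^{-1}\boldsymbol{\omega}\boldsymbol{\delta}$, with $\boldsymbol{\omega}_{\mathbf{Y}}=(\mathbf{\Omega}_{\mathbf{Y}}\odot\mathbf{I}_p)^{1/2}$.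
   Context: Let $p\ge1$, $\boldsymbol{\xi}\in\mathbb{R}^p$, $\mathbf{\Omega}$ a $p\times p$ symmetric positive definite matrix, $\boldsymbol{\omega}=(\mathbf{\Omega}\odot\mathbf{I}_p)^{1/2}=\mathrm{diag}(\mathbf{\Omega}_{11}^{1/2},\dots,\mathbf{\Omega}_{pp}^{1/2})$ ($\odot$ is the entrywise/Hadamard product), $\overline{\mathbf{\Omega}}=\boldsymbol{\omega}^{-1}\mathbf{\Omega}\boldsymbol{\omega}^{-1}$, and $\boldsymbol{\delta}\in\mathbb{R}^p$ with $\overline{\mathbf{\Omega}}-\boldsymbol{\delta}\boldsymbol{\delta}^\top$ positive definite. For a real random variable $U$ with CDF $H$ and $\mathbf{Z}\sim\mathcal{N}_p(\mathbf{0},\overline{\mathbf{\Omega}}-\boldsymbol{\delta}\boldsymbol{\delta}^\top)$ independent of $U$, $\boldsymbol{\xi}+\boldsymbol{\omega}(\boldsymbol{\delta}U+\mathbf{Z})$ is said to have distribution $\mathcal{MMN}_p(\boldsymbol{\xi},\mathbf{\Omega},\boldsymbol{\delta};H)$. $\boldsymbol{\mu}\in\mathbb{R}^p$ and $\mathbf{\Sigma}$ is a $p\times p$ covariance matrix. *)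

theory Defs
  imports "HOL-Probability.Probability"
begin

definition hadamard :: "real^'n^'m \<Rightarrow> real^'n^'m \<Rightarrow> real^'n^'m" (infixl "\<odot>" 70) where
  "A \<odot> B = (\<chi> i j. A $ i $ j * B $ i $ j)"

definition sym_matrix :: "real^'n^'n \<Rightarrow> bool" where
  "sym_matrix A \<longleftrightarrow> transpose A = A"

definition pos_def :: "real^'n^'n \<Rightarrow> bool" where
  "pos_def A \<longleftrightarrow> sym_matrix A \<and> (\<forall>x. x \<noteq> 0 \<longrightarrow> x \<bullet> (A *v x) > 0)"

definition pos_semidef :: "real^'n^'n \<Rightarrow> bool" where
  "pos_semidef A \<longleftrightarrow> sym_matrix A \<and> (\<forall>x. x \<bullet> (A *v x) \<ge> 0)"

text \<open>Square root of the diagonal matrix \<open>\<Omega> \<odot> I\<close>: entrywise square root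
  (which is the principal square root of a nonnegative diagonal matrix).\<close>
definition omega_of :: "real^'n^'n \<Rightarrow> real^'n^'n" where
  "omega_of \<Omega> = (\<chi> i j. sqrt ((\<Omega> \<odot> mat 1) $ i $ j))"

definition Omega_bar :: "real^'n^'n \<Rightarrow> real^'n^'n" where
  "Omega_bar \<Omega> = matrix_inv (omega_of \<Omega>) ** \<Omega> ** matrix_inv (omega_of \<Omega>)"

definition outer :: "real^'n \<Rightarrow> real^'n \<Rightarrow> real^'n^'n" where
  "outer a b = (\<chi> i j. a $ i * b $ j)"

definition normal_rv :: "'a measure \<Rightarrow> ('a \<Rightarrow> real) \<Rightarrow> real \<Rightarrow> real \<Rightarrow> bool" where
  "normal_rv M X m v \<longleftrightarrow>
     X \<in> borel_measurable M \<and>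
     ((v > 0 \<and> distributed M lborel X (\<lambda>x. ennreal (normal_density m (sqrt v) x))) \<or>
      (v = 0 \<and> (AE x in M. X x = m)))"

definition gaussian_law :: "(real^'n) measure \<Rightarrow> real^'n \<Rightarrow> real^'n^'n \<Rightarrow> bool" where
  "gaussian_law Q \<mu> \<Sigma> \<longleftrightarrow> prob_space Q \<and> sets Q = sets borel \<and>
     (\<forall>t. normal_rv Q (\<lambda>x. t \<bullet> x) (t \<bullet> \<mu>) (t \<bullet> (\<Sigma> *v t)))"

definition is_normal_vec :: "'a measure \<Rightarrow> ('a \<Rightarrow> real^'n) \<Rightarrow> real^'n \<Rightarrow> real^'n^'n \<Rightarrow> bool" where
  "is_normal_vec M Y \<mu> \<Sigma> \<longleftrightarrow> Y \<in> borel_measurable M \<and> gaussian_law (distr M borel Y) \<mu> \<Sigma>"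

text \<open>\<open>Y \<sim> MMN_p(\<xi>,\<Omega>,\<delta>;H)\<close>: Y has the law of \<open>\<xi> + \<omega>(\<delta> U + Z)\<close> with U (CDF H)
  and \<open>Z \<sim> N_p(0, \<Omega>bar - \<delta>\<delta>^T)\<close> independent, i.e. the image of the product law.\<close>
definition is_MMN :: "'a measure \<Rightarrow> ('a \<Rightarrow> real^'n) \<Rightarrow> real^'n \<Rightarrow> real^'n^'n \<Rightarrow> real^'n
                      \<Rightarrow> (real \<Rightarrow> real) \<Rightarrow> bool" where
  "is_MMN M Y \<xi> \<Omega> \<delta> H \<longleftrightarrow>
     pos_def \<Omega> \<and> pos_def (Omega_bar \<Omega> - outer \<delta> \<delta>) \<and>
     Y \<in> borel_measurable M \<and>
     (\<exists>L Q. prob_space L \<and> sets L = sets borel \<and> cdf L = H \<and>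
            gaussian_law Q 0 (Omega_bar \<Omega> - outer \<delta> \<delta>) \<and>
            distr M borel Y =
              distr (L \<Otimes>\<^sub>M Q) borel (\<lambda>(u, z). \<xi> + omega_of \<Omega> *v (u *\<^sub>R \<delta> + z)))"

end

theory Submission
  imports Defs
begin


lemma distr_pair_snd':
  assumes "prob_space M" "sigma_finite_measure N"
  shows "distr (M \<Otimes>\<^sub>M N) N snd = N"
proof (intro measure_eqI)
  interpret N: sigma_finite_measure N by fact
  interpret M: prob_space M by fact
  fix A assume A: "A \<in> sets (distr (M \<Otimes>\<^sub>M N) N snd)"
  from A have "emeasure (distr (M \<Otimes>\<^sub>M N) N snd) A = emeasure (M \<Otimes>\<^sub>M N) (space M \<times> A)"
    by (auto simp add: emeasure_distr space_pair_measure dest: sets.sets_into_space intro!: arg_cong2[where f=emeasure])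
  with A show "emeasure (distr (M \<Otimes>\<^sub>M N) N snd) A = emeasure N A"
    by (simp add: N.emeasure_pair_measure_Times M.emeasure_space_1)
qed simp

lemma pair_measure_assoc:
  assumes "sigma_finite_measure M1" "sigma_finite_measure M2" "sigma_finite_measure M3"
  shows "M1 \<Otimes>\<^sub>M (M2 \<Otimes>\<^sub>M M3) =
    distr ((M1 \<Otimes>\<^sub>M M2) \<Otimes>\<^sub>M M3) (M1 \<Otimes>\<^sub>M (M2 \<Otimes>\<^sub>M M3)) (\<lambda>((x,y),z). (x,(y,z)))"
proof (rule measure_eqI)
  interpret M1: sigma_finite_measure M1 by fact
  interpret M2: sigma_finite_measure M2 by fact
  interpret M3: sigma_finite_measure M3 by fact
  interpret M23: pair_sigma_finite M2 M3 ..
  interpret M12: pair_sigma_finite M1 M2 ..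
  have S23: "sigma_finite_measure (M2 \<Otimes>\<^sub>M M3)"
    by (simp add: M23.sigma_finite_measure_axioms)
  have mA: "(\<lambda>((x,y),z). (x,(y,z))) \<in> measurable ((M1 \<Otimes>\<^sub>M M2) \<Otimes>\<^sub>M M3) (M1 \<Otimes>\<^sub>M (M2 \<Otimes>\<^sub>M M3))"
  proof -
    have e: "(\<lambda>((x,y),z). (x,(y,z))) = (\<lambda>p. (fst (fst p), (snd (fst p), snd p)))" by auto
    show ?thesis unfolding e by measurable
  qed
  fix A assume A: "A \<in> sets (M1 \<Otimes>\<^sub>M (M2 \<Otimes>\<^sub>M M3))"
  have "emeasure (M1 \<Otimes>\<^sub>M (M2 \<Otimes>\<^sub>M M3)) A = (\<integral>\<^sup>+x. emeasure (M2 \<Otimes>\<^sub>M M3) (Pair x -` A) \<partial>M1)"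
    using A by (rule sigma_finite_measure.emeasure_pair_measure_alt[OF S23])
  also have "\<dots> = (\<integral>\<^sup>+x. \<integral>\<^sup>+y. emeasure M3 (Pair y -` (Pair x -` A)) \<partial>M2 \<partial>M1)"
    apply (rule nn_integral_cong)
    apply (rule M3.emeasure_pair_measure_alt)
    using A by (simp add: measurable_Pair2)
  also have "\<dots> = (\<integral>\<^sup>+p. emeasure M3 (Pair p -` ((\<lambda>((x,y),z). (x,(y,z))) -` A \<inter> space ((M1 \<Otimes>\<^sub>M M2) \<Otimes>\<^sub>M M3))) \<partial>(M1 \<Otimes>\<^sub>M M2))"
  proof -
    have m: "(\<lambda>p. emeasure M3 (Pair p -` ((\<lambda>((x,y),z). (x,(y,z))) -` A \<inter> space ((M1 \<Otimes>\<^sub>M M2) \<Otimes>\<^sub>M M3)))) \<in> borel_measurable (M1 \<Otimes>\<^sub>M M2)"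
      apply (rule M3.measurable_emeasure_Pair)
      using mA A by (rule measurable_sets)
    show ?thesis
      unfolding M2.nn_integral_fst[OF m, symmetric]
      using sets.sets_into_space[OF A]
      by (intro nn_integral_cong arg_cong[where f="emeasure M3"]) (auto simp: space_pair_measure)
  qed
  also have "\<dots> = emeasure ((M1 \<Otimes>\<^sub>M M2) \<Otimes>\<^sub>M M3) ((\<lambda>((x,y),z). (x,(y,z))) -` A \<inter> space ((M1 \<Otimes>\<^sub>M M2) \<Otimes>\<^sub>M M3))"
    apply (rule M3.emeasure_pair_measure_alt[symmetric])
    using mA A by (rule measurable_sets)
  also have "\<dots> = emeasure (distr ((M1 \<Otimes>\<^sub>M M2) \<Otimes>\<^sub>M M3) (M1 \<Otimes>\<^sub>M (M2 \<Otimes>\<^sub>M M3)) (\<lambda>((x,y),z). (x,(y,z)))) A"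
    using A mA by (simp add: emeasure_distr)
  finally show "emeasure (M1 \<Otimes>\<^sub>M (M2 \<Otimes>\<^sub>M M3)) A = emeasure (distr ((M1 \<Otimes>\<^sub>M M2) \<Otimes>\<^sub>M M3) (M1 \<Otimes>\<^sub>M (M2 \<Otimes>\<^sub>M M3)) (\<lambda>((x,y),z). (x,(y,z)))) A" .
qed simp




lemma distributed_AE_cong:
  assumes "distributed M N X f" "AE x in M. X x = X' x" "X' \<in> measurable M N"
  shows "distributed M N X' f"
proof -
  have "distr M N X' = distr M N X"
    using assms by (intro distr_cong_AE) (auto simp: distributed_def eq_commute)
  then show ?thesis using assms by (simp add: distributed_def)
qed

lemma normal_rv_distr_eq:
  assumes "X \<in> borel_measurable M" "X' \<in> borel_measurable M'"
    "distr M borel X = distr M' borel X'" "normal_rv M X m v"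
  shows "normal_rv M' X' m v"
proof -
  have e1: "distr M lborel X = distr M borel X" by (rule distr_cong) auto
  have e2: "distr M' lborel X' = distr M' borel X'" by (rule distr_cong) auto
  have ae: "(AE x in M. X x = m) \<longleftrightarrow> (AE x in M'. X' x = m)"
  proof -
    have "(AE x in M. X x = m) \<longleftrightarrow> (AE y in distr M borel X. y = m)"
      using assms(1) by (subst AE_distr_iff) auto
    also have "\<dots> \<longleftrightarrow> (AE x in M'. X' x = m)"
      using assms(2,3) by (subst assms(3), subst AE_distr_iff) auto
    finally show ?thesis .
  qed
  show ?thesis using assms ae e1 e2
    unfolding normal_rv_def distributed_def by auto
qed

lemma normal_rv_shift:
  assumes "prob_space M" "normal_rv M X m v"
  shows "normal_rv M (\<lambda>x. X x + c) (m + c) v"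
proof -
  interpret prob_space M by fact
  have mX: "X \<in> borel_measurable M" using assms(2) by (simp add: normal_rv_def)
  show ?thesis
  proof (cases "v > 0")
    case True
    then have d: "distributed M lborel X (\<lambda>x. ennreal (normal_density m (sqrt v) x))"
      using assms(2) by (auto simp: normal_rv_def)
    have "distributed M lborel (\<lambda>x. c + 1 * X x) (normal_density (c + 1 * m) (\<bar>1\<bar> * sqrt v))"
      by (rule normal_density_affine[OF d]) (use True in auto)
    then show ?thesis using True mX by (simp add: normal_rv_def add.commute)
  next
    case False
    then show ?thesis using assms(2) mX by (auto simp: normal_rv_def)
  qed
qed

lemma normal_rv_add_indep:
  assumes "prob_space M" "prob_space.indep_var M borel X borel Y"
    "normal_rv M X m1 v1" "normal_rv M Y m2 v2"
  shows "normal_rv M (\<lambda>x. X x + Y x) (m1 + m2) (v1 + v2)"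
proof -
  interpret prob_space M by fact
  have mX: "X \<in> borel_measurable M" and mY: "Y \<in> borel_measurable M"
    using assms by (auto simp: normal_rv_def)
  have mS: "(\<lambda>x. X x + Y x) \<in> borel_measurable M" using mX mY by simp
  have v1: "v1 \<ge> 0" and v2: "v2 \<ge> 0" using assms(3,4) by (auto simp: normal_rv_def)
  consider "v1 > 0" "v2 > 0" | "v1 > 0" "v2 = 0" | "v1 = 0" "v2 > 0" | "v1 = 0" "v2 = 0"
    using v1 v2 by linarith
  then show ?thesis
  proof cases
    case 1
    then have dX: "distributed M lborel X (normal_density m1 (sqrt v1))"
      and dY: "distributed M lborel Y (normal_density m2 (sqrt v2))"
      using assms(3,4) by (auto simp: normal_rv_def)
    have "distributed M lborel (\<lambda>x. X x + Y x) (normal_density (m1 + m2) (sqrt ((sqrt v1)\<^sup>2 + (sqrt v2)\<^sup>2)))"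
      by (rule add_indep_normal[OF assms(2) _ _ dX dY]) (use 1 in auto)
    then show ?thesis using 1 mS by (simp add: normal_rv_def)
  next
    case 2
    then have dX: "X \<in> borel_measurable M \<and> distributed M lborel X (normal_density m1 (sqrt v1))"
      and aY: "AE x in M. Y x = m2"
      using assms(3,4) by (auto simp: normal_rv_def)
    have "normal_rv M (\<lambda>x. X x + m2) (m1 + m2) v1"
      by (rule normal_rv_shift) (use assms 2 in auto)
    then have d: "distributed M lborel (\<lambda>x. X x + m2) (normal_density (m1 + m2) (sqrt v1))"
      using 2 by (auto simp: normal_rv_def)
    have "distributed M lborel (\<lambda>x. X x + Y x) (normal_density (m1 + m2) (sqrt v1))"
      by (rule distributed_AE_cong[OF d]) (use aY mS in auto)
    then show ?thesis using 2 mS by (simp add: normal_rv_def)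
  next
    case 3
    then have aX: "AE x in M. X x = m1"
      using assms(3,4) by (auto simp: normal_rv_def)
    have "normal_rv M (\<lambda>x. Y x + m1) (m2 + m1) v2"
      by (rule normal_rv_shift) (use assms 3 in auto)
    then have d: "distributed M lborel (\<lambda>x. Y x + m1) (normal_density (m1 + m2) (sqrt v2))"
      using 3 by (auto simp: normal_rv_def add.commute)
    have "distributed M lborel (\<lambda>x. X x + Y x) (normal_density (m1 + m2) (sqrt v2))"
      by (rule distributed_AE_cong[OF d]) (use aX mS in auto)
    then show ?thesis using 3 mS by (simp add: normal_rv_def)
  next
    case 4
    then show ?thesis using assms(3,4) mS by (auto simp: normal_rv_def)
  qed
qed




lemma dot_mv: "(x::real^'n) \<bullet> (A *v y) = (transpose A *v x) \<bullet> y"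
  by (metis dot_lmul_matrix inner_commute transpose_matrix_vector)

lemma normal_rv_fst:
  assumes "prob_space Q" "prob_space P" "normal_rv Q f m v"
  shows "normal_rv (Q \<Otimes>\<^sub>M P) (\<lambda>p. f (fst p)) m v"
proof -
  interpret P: prob_space P by fact
  have mf: "f \<in> borel_measurable Q" using assms(3) by (simp add: normal_rv_def)
  have "distr Q borel f = distr (distr (Q \<Otimes>\<^sub>M P) Q fst) borel f" by (simp add: P.distr_pair_fst)
  also have "\<dots> = distr (Q \<Otimes>\<^sub>M P) borel (\<lambda>p. f (fst p))" using mf by (subst distr_distr) (auto simp: o_def)
  finally show ?thesis using mf by (intro normal_rv_distr_eq[OF mf _ _ assms(3)]) auto
qed

lemma normal_rv_snd:
  assumes "prob_space Q" "prob_space P" "normal_rv P g m v"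
  shows "normal_rv (Q \<Otimes>\<^sub>M P) (\<lambda>p. g (snd p)) m v"
proof -
  interpret P: prob_space P by fact
  have mg: "g \<in> borel_measurable P" using assms(3) by (simp add: normal_rv_def)
  have "distr P borel g = distr (distr (Q \<Otimes>\<^sub>M P) P snd) borel g"
    using distr_pair_snd'[OF assms(1) P.sigma_finite_measure_axioms] by simp
  also have "\<dots> = distr (Q \<Otimes>\<^sub>M P) borel (\<lambda>p. g (snd p))" using mg by (subst distr_distr) (auto simp: o_def)
  finally show ?thesis using mg by (intro normal_rv_distr_eq[OF mg _ _ assms(3)]) auto
qed

lemma indep_fst_snd:
  assumes "prob_space Q" "prob_space P" "f \<in> borel_measurable Q" "(g::_\<Rightarrow>real) \<in> borel_measurable P"
  shows "prob_space.indep_var (Q \<Otimes>\<^sub>M P) borel (\<lambda>p. (f::_\<Rightarrow>real) (fst p)) borel (\<lambda>p. g (snd p))"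
proof -
  interpret Q: prob_space Q by fact
  interpret P: prob_space P by fact
  interpret QP: pair_prob_space Q P ..
  have sf: "sigma_finite_measure (distr P borel g)"
    using P.prob_space_distr[OF assms(4)] by (simp add: prob_space_imp_sigma_finite)
  have e1: "distr (Q \<Otimes>\<^sub>M P) borel (\<lambda>p. f (fst p)) = distr Q borel f"
  proof -
    have "distr Q borel f = distr (distr (Q \<Otimes>\<^sub>M P) Q fst) borel f" by (simp add: P.distr_pair_fst)
    also have "\<dots> = distr (Q \<Otimes>\<^sub>M P) borel (\<lambda>p. f (fst p))" using assms(3) by (subst distr_distr) (auto simp: o_def)
    finally show ?thesis ..
  qed
  have e2: "distr (Q \<Otimes>\<^sub>M P) borel (\<lambda>p. g (snd p)) = distr P borel g"
  proof -
    have "distr P borel g = distr (distr (Q \<Otimes>\<^sub>M P) P snd) borel g"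
      using distr_pair_snd'[OF assms(1) P.sigma_finite_measure_axioms] by simp
    also have "\<dots> = distr (Q \<Otimes>\<^sub>M P) borel (\<lambda>p. g (snd p))" using assms(4) by (subst distr_distr) (auto simp: o_def)
    finally show ?thesis ..
  qed
  have "distr Q borel f \<Otimes>\<^sub>M distr P borel g = distr (Q \<Otimes>\<^sub>M P) (borel \<Otimes>\<^sub>M borel) (\<lambda>(x, y). (f x, g y))"
    by (rule pair_measure_distr[OF assms(3,4) sf])
  also have "\<dots> = distr (Q \<Otimes>\<^sub>M P) (borel \<Otimes>\<^sub>M borel) (\<lambda>p. (f (fst p), g (snd p)))"
    by (rule distr_cong) auto
  finally show ?thesis
    using assms(3,4) e1 e2 by (subst QP.P.indep_var_distribution_eq) auto
qed




lemma quad_transpose: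
  fixes K :: "real^'n^'m" and C :: "real^'n^'n"
  shows "(transpose K *v t) \<bullet> (C *v (transpose K *v t)) = t \<bullet> ((K ** C ** transpose K) *v t)"
proof -
  have "t \<bullet> ((K ** C ** transpose K) *v t) = t \<bullet> (K *v (C *v (transpose K *v t)))"
    by (simp only: matrix_vector_mul_assoc matrix_mul_assoc)
  also have "\<dots> = (transpose K *v t) \<bullet> (C *v (transpose K *v t))"
    by (rule dot_mv)
  finally show ?thesis ..
qed

lemma gaussian_law_lin:
  fixes K :: "real^'n^'m" and D :: "real^'k^'m" and c :: "real^'m"
  assumes Q: "gaussian_law Q m1 C1" and P: "gaussian_law P m2 C2"
  shows "gaussian_law (distr (Q \<Otimes>\<^sub>M P) borel (\<lambda>(z,y). K *v z + D *v y + c))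
           (K *v m1 + D *v m2 + c) (K ** C1 ** transpose K + D ** C2 ** transpose D)"
proof -
  have pQ: "prob_space Q" and sQ: "sets Q = sets borel" and nQ: "\<And>t. normal_rv Q (\<lambda>x. t \<bullet> x) (t \<bullet> m1) (t \<bullet> (C1 *v t))"
    using Q by (auto simp: gaussian_law_def)
  have pP: "prob_space P" and sP: "sets P = sets borel" and nP: "\<And>t. normal_rv P (\<lambda>x. t \<bullet> x) (t \<bullet> m2) (t \<bullet> (C2 *v t))"
    using P by (auto simp: gaussian_law_def)
  interpret Q: prob_space Q by fact
  interpret P: prob_space P by fact
  interpret QP: pair_prob_space Q P ..
  let ?F = "\<lambda>(z,y). K *v z + D *v y + c"
  have mF: "?F \<in> borel_measurable (Q \<Otimes>\<^sub>M P)"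
  proof -
    have "(\<lambda>p. K *v fst p + D *v snd p + c) \<in> borel_measurable (Q \<Otimes>\<^sub>M P)"
    proof -
      have m1: "(\<lambda>p. K *v fst p) \<in> borel_measurable (Q \<Otimes>\<^sub>M P)"
        apply (rule measurable_compose[OF measurable_fst])
        apply (subst measurable_cong_sets[OF sQ refl])
        by (intro borel_measurable_continuous_onI continuous_intros) 
      have m2: "(\<lambda>p. D *v snd p) \<in> borel_measurable (Q \<Otimes>\<^sub>M P)"
        apply (rule measurable_compose[OF measurable_snd])
        apply (subst measurable_cong_sets[OF sP refl])
        by (intro borel_measurable_continuous_onI continuous_intros)
      show ?thesis using m1 m2 by simp
    qed
    moreover have "?F = (\<lambda>p. K *v fst p + D *v snd p + c)" by auto
    ultimately show ?thesis by simp
  qed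
  show ?thesis
    unfolding gaussian_law_def
  proof (intro conjI allI)
    show "prob_space (distr (Q \<Otimes>\<^sub>M P) borel ?F)"
      by (rule QP.P.prob_space_distr[OF mF])
    show "sets (distr (Q \<Otimes>\<^sub>M P) borel ?F) = sets borel" by simp
  next
    fix t :: "real^'m"
    let ?a = "transpose K *v t" and ?b = "transpose D *v t"
    have n1: "normal_rv (Q \<Otimes>\<^sub>M P) (\<lambda>p. ?a \<bullet> fst p) (?a \<bullet> m1) (?a \<bullet> (C1 *v ?a))"
      by (rule normal_rv_fst[OF pQ pP nQ])
    have n2: "normal_rv (Q \<Otimes>\<^sub>M P) (\<lambda>p. ?b \<bullet> snd p + t \<bullet> c) (?b \<bullet> m2 + t \<bullet> c) (?b \<bullet> (C2 *v ?b))"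
      by (rule normal_rv_snd[OF pQ pP normal_rv_shift[OF pP nP]])
    have mq: "(\<lambda>x. ?a \<bullet> x) \<in> borel_measurable Q"
      using nQ[of ?a] by (simp add: normal_rv_def)
    have mp: "(\<lambda>x. ?b \<bullet> x + t \<bullet> c) \<in> borel_measurable P"
    proof -
      have "(\<lambda>x. ?b \<bullet> x) \<in> borel_measurable P" using nP[of ?b] by (simp add: normal_rv_def)
      then show ?thesis by simp
    qed
    have ind: "prob_space.indep_var (Q \<Otimes>\<^sub>M P) borel (\<lambda>p. ?a \<bullet> fst p) borel (\<lambda>p. ?b \<bullet> snd p + t \<bullet> c)"
      using indep_fst_snd[OF pQ pP mq mp] by simp
    have n: "normal_rv (Q \<Otimes>\<^sub>M P) (\<lambda>p. ?a \<bullet> fst p + (?b \<bullet> snd p + t \<bullet> c))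
               (?a \<bullet> m1 + (?b \<bullet> m2 + t \<bullet> c)) (?a \<bullet> (C1 *v ?a) + ?b \<bullet> (C2 *v ?b))"
      by (rule normal_rv_add_indep[OF QP.P.prob_space_axioms ind n1 n2])
    have eqf: "\<And>p. ?a \<bullet> fst p + (?b \<bullet> snd p + t \<bullet> c) = t \<bullet> ?F p"
      by (auto simp: dot_mv inner_add_right)
    have eqm: "?a \<bullet> m1 + (?b \<bullet> m2 + t \<bullet> c) = t \<bullet> (K *v m1 + D *v m2 + c)"
      by (auto simp: dot_mv inner_add_right)
    have eqv: "?a \<bullet> (C1 *v ?a) + ?b \<bullet> (C2 *v ?b) = t \<bullet> ((K ** C1 ** transpose K + D ** C2 ** transpose D) *v t)"
      unfolding quad_transpose matrix_vector_mult_add_rdistrib inner_add_right ..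
    have n': "normal_rv (Q \<Otimes>\<^sub>M P) (\<lambda>p. t \<bullet> ?F p) (t \<bullet> (K *v m1 + D *v m2 + c))
               (t \<bullet> ((K ** C1 ** transpose K + D ** C2 ** transpose D) *v t))"
      using n unfolding eqf eqm eqv .
    show "normal_rv (distr (Q \<Otimes>\<^sub>M P) borel ?F) (\<lambda>x. t \<bullet> x) (t \<bullet> (K *v m1 + D *v m2 + c))
               (t \<bullet> ((K ** C1 ** transpose K + D ** C2 ** transpose D) *v t))"
    proof (rule normal_rv_distr_eq[OF _ _ _ n'])
      show "(\<lambda>p. t \<bullet> ?F p) \<in> borel_measurable (Q \<Otimes>\<^sub>M P)" using n' by (simp add: normal_rv_def)
      show "(\<lambda>x. t \<bullet> x) \<in> borel_measurable (distr (Q \<Otimes>\<^sub>M P) borel ?F)" by simp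
      show "distr (Q \<Otimes>\<^sub>M P) borel (\<lambda>p. t \<bullet> ?F p) = distr (distr (Q \<Otimes>\<^sub>M P) borel ?F) borel (\<lambda>x. t \<bullet> x)"
        using mF by (subst distr_distr) (auto simp: o_def)
    qed
  qed
qed




definition dg :: "('n::finite \<Rightarrow> real) \<Rightarrow> real^'n^'n" where
  "dg a = (\<chi> i j. if i = j then a i else 0)"

lemma matrix_inv_eq:
  fixes A :: "real^'n^'n"
  assumes "A ** B = mat 1" "B ** A = mat 1"
  shows "matrix_inv A = B"
proof -
  have ex: "\<exists>A'. A ** A' = mat 1 \<and> A' ** A = mat 1" using assms by blast
  have "A ** matrix_inv A = mat 1 \<and> matrix_inv A ** A = mat 1"
    unfolding matrix_inv_def by (rule someI_ex[OF ex])
  then have "matrix_inv A ** A = mat 1" by simp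
  have "matrix_inv A = matrix_inv A ** (A ** B)" using assms by (simp add: matrix_mul_rid)
  also have "\<dots> = (matrix_inv A ** A) ** B" by (simp add: matrix_mul_assoc)
  also have "\<dots> = B" using \<open>matrix_inv A ** A = mat 1\<close> by (simp add: matrix_mul_lid)
  finally show ?thesis .
qed

lemma dg_mult_dg[simp]: "dg a ** dg b = dg (\<lambda>i. a i * b i)"
  by (simp add: dg_def matrix_matrix_mult_def vec_eq_iff if_distrib[where f="\<lambda>x. x * _"] cong: if_cong)

lemma dg_one: "dg (\<lambda>i. 1) = mat 1"
  by (simp add: dg_def mat_def)

lemma dg_mult_left[simp]: "(dg a ** M) $ i $ j = a i * M $ i $ j"
  by (simp add: dg_def matrix_matrix_mult_def if_distrib[where f="\<lambda>x. x * _"] cong: if_cong)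

lemma dg_mult_right[simp]: "(M ** dg a) $ i $ j = M $ i $ j * a j"
  by (simp add: dg_def matrix_matrix_mult_def if_distrib[where f="\<lambda>x. _ * x"] cong: if_cong)

lemma dg_mv[simp]: "(dg a *v x) $ i = a i * x $ i"
  by (simp add: dg_def matrix_vector_mult_def if_distrib[where f="\<lambda>x. x * _"] cong: if_cong)

lemma transpose_dg[simp]: "transpose (dg a) = dg a"
  by (simp add: dg_def transpose_def vec_eq_iff)

lemma matrix_inv_dg:
  assumes "\<And>i. a i \<noteq> 0"
  shows "matrix_inv (dg a) = dg (\<lambda>i. inverse (a i))"
  by (rule matrix_inv_eq) (simp_all add: assms dg_one)

lemma omega_of_dg: "omega_of A = dg (\<lambda>i. sqrt (A $ i $ i))"
  by (simp add: omega_of_def dg_def hadamard_def mat_def vec_eq_iff)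

lemma outer_nth[simp]: "outer a b $ i $ j = a $ i * b $ j"
  by (simp add: outer_def)

lemma dg_mv_zero:
  assumes "\<And>i. a i \<noteq> 0" "dg a *v x = 0"
  shows "x = 0"
proof -
  have "\<And>i. a i * x $ i = 0" using assms(2) by (metis dg_mv zero_index)
  then show ?thesis using assms(1) by (simp add: vec_eq_iff)
qed

lemma pos_def_diag:
  assumes "pos_def A" shows "A $ i $ i > 0"
proof -
  have "axis i 1 \<noteq> (0::real^_)" by (simp add: axis_eq_0_iff)
  then have "axis i 1 \<bullet> (A *v axis i 1) > 0" using assms by (simp add: pos_def_def)
  then show ?thesis
    by (simp add: inner_commute[of "axis i 1"] inner_axis matrix_vector_mult_basis column_def)
qed

lemma transpose_add: "transpose (A + B) = transpose A + transpose (B::real^'n^'m)"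
  by (simp add: transpose_def vec_eq_iff)

lemma pos_def_add:
  assumes "pos_def A" "pos_semidef B"
  shows "pos_def (A + B)"
  using assms unfolding pos_def_def pos_semidef_def sym_matrix_def
  by (auto simp: transpose_add matrix_vector_mult_add_rdistrib inner_add_right add_pos_nonneg)




lemma pos_def_congruence:
  fixes K :: "real^'n^'m" and D :: "real^'k^'m"
  assumes "pos_def C1" "pos_semidef C2" "\<And>x. transpose K *v x = 0 \<Longrightarrow> x = 0"
  shows "pos_def (K ** C1 ** transpose K + D ** C2 ** transpose D)"
proof -
  have s1: "transpose C1 = C1" and s2: "transpose C2 = C2"
    using assms by (auto simp: pos_def_def pos_semidef_def sym_matrix_def)
  have sym: "sym_matrix (K ** C1 ** transpose K + D ** C2 ** transpose D)"
    unfolding sym_matrix_def transpose_add matrix_transpose_mul transpose_transpose s1 s2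
    by (simp add: matrix_mul_assoc)
  have q: "x \<bullet> ((K ** C1 ** transpose K + D ** C2 ** transpose D) *v x) > 0" if "x \<noteq> 0" for x
  proof -
    have "transpose K *v x \<noteq> 0" using assms(3) that by blast
    then have "(transpose K *v x) \<bullet> (C1 *v (transpose K *v x)) > 0"
      using assms(1) by (simp add: pos_def_def)
    moreover have "(transpose D *v x) \<bullet> (C2 *v (transpose D *v x)) \<ge> 0"
      using assms(2) by (simp add: pos_semidef_def)
    ultimately show ?thesis
      unfolding matrix_vector_mult_add_rdistrib inner_add_right quad_transpose[symmetric] by linarith
  qed
  show ?thesis using sym q by (simp add: pos_def_def)
qed




lemma mv_borel[measurable]: "(\<lambda>x. (A::real^'n^'m) *v x) \<in> borel_measurable borel"
  by (intro borel_measurable_continuous_onI continuous_intros)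

theorem theorem2:
  fixes M :: "'a measure"
    and Y1 Y2 :: "'a \<Rightarrow> real^'n"
    and \<xi> \<mu> \<delta> :: "real^'n"
    and \<Omega> \<Sigma> :: "real^'n^'n"
    and H :: "real \<Rightarrow> real"
  assumes "prob_space M"
    and "pos_semidef \<Sigma>"
    and "is_MMN M Y1 \<xi> \<Omega> \<delta> H"
    and "is_normal_vec M Y2 \<mu> \<Sigma>"
    and "prob_space.indep_var M borel Y1 borel Y2"
  shows "is_MMN M (\<lambda>x. Y1 x + Y2 x) (\<xi> + \<mu>) (\<Omega> + \<Sigma>)
           (matrix_inv (omega_of (\<Omega> + \<Sigma>)) *v (omega_of \<Omega> *v \<delta>)) H"
proof -
  interpret M: prob_space M by fact
  let ?C1 = "Omega_bar \<Omega> - outer \<delta> \<delta>"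
  have pdO: "pos_def \<Omega>" and pdC1: "pos_def ?C1" and mY1: "Y1 \<in> borel_measurable M"
    using assms(3) by (auto simp: is_MMN_def)
  obtain L Q where pL: "prob_space L" and sL: "sets L = sets borel" and cL: "cdf L = H"
    and gQ: "gaussian_law Q 0 ?C1"
    and eY1: "distr M borel Y1 = distr (L \<Otimes>\<^sub>M Q) borel (\<lambda>(u, z). \<xi> + omega_of \<Omega> *v (u *\<^sub>R \<delta> + z))"
    using assms(3) unfolding is_MMN_def by blast
  have mY2: "Y2 \<in> borel_measurable M" and gP: "gaussian_law (distr M borel Y2) \<mu> \<Sigma>"
    using assms(4) by (auto simp: is_normal_vec_def)
  define P2 where "P2 = distr M borel Y2"
  have pQ: "prob_space Q" and sQ: "sets Q = sets borel" using gQ by (auto simp: gaussian_law_def)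
  have pP: "prob_space P2" and sP: "sets P2 = sets borel" using gP by (auto simp: gaussian_law_def P2_def)
  have pdOS: "pos_def (\<Omega> + \<Sigma>)" by (rule pos_def_add[OF pdO assms(2)])
  define a where "a i = sqrt (\<Omega> $ i $ i)" for i
  define b where "b i = sqrt ((\<Omega> + \<Sigma>) $ i $ i)" for i
  have a0: "a i > 0" for i unfolding a_def using pos_def_diag[OF pdO] by simp
  have b0: "b i > 0" for i unfolding b_def using pos_def_diag[OF pdOS] by simp
  have anz[simp]: "a i \<noteq> 0" for i using a0[of i] by simp
  have bnz[simp]: "b i \<noteq> 0" for i using b0[of i] by simp
  have om: "omega_of \<Omega> = dg a" by (simp add: omega_of_dg a_def[abs_def])
  have omY: "omega_of (\<Omega> + \<Sigma>) = dg b" by (simp add: omega_of_dg b_def[abs_def])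
  have ia: "matrix_inv (dg a) = dg (\<lambda>i. inverse (a i))" by (rule matrix_inv_dg, metis a0 less_irrefl)
  have ib: "matrix_inv (dg b) = dg (\<lambda>i. inverse (b i))" by (rule matrix_inv_dg, metis b0 less_irrefl)
  define \<delta>Y where "\<delta>Y = matrix_inv (omega_of (\<Omega> + \<Sigma>)) *v (omega_of \<Omega> *v \<delta>)"
  define K where "K = dg (\<lambda>i. inverse (b i) * a i)"
  define D where "D = dg (\<lambda>i. inverse (b i))"
  define c where "c = - (D *v \<mu>)"
  define h where "h = (\<lambda>(z::real^'n, y::real^'n). K *v z + D *v y + c)"
  define Q' where "Q' = distr (Q \<Otimes>\<^sub>M P2) borel h"
  have g1: "gaussian_law Q' (K *v 0 + D *v \<mu> + c) (K ** ?C1 ** transpose K + D ** \<Sigma> ** transpose D)"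
    unfolding Q'_def h_def by (rule gaussian_law_lin[OF gQ gP[folded P2_def]])
  have cov: "K ** ?C1 ** transpose K + D ** \<Sigma> ** transpose D = Omega_bar (\<Omega> + \<Sigma>) - outer \<delta>Y \<delta>Y"
    unfolding Omega_bar_def \<delta>Y_def om omY ia ib K_def D_def
    by (simp add: vec_eq_iff field_simps)
  have mean: "K *v 0 + D *v \<mu> + c = 0" by (simp add: c_def)
  have gQ': "gaussian_law Q' 0 (Omega_bar (\<Omega> + \<Sigma>) - outer \<delta>Y \<delta>Y)"
    using g1 unfolding cov mean .
  have pdC2: "pos_def (Omega_bar (\<Omega> + \<Sigma>) - outer \<delta>Y \<delta>Y)"
    unfolding cov[symmetric]
  proof (rule pos_def_congruence[OF pdC1 assms(2)])
    fix x assume "transpose K *v x = 0"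
    then show "x = 0" unfolding K_def transpose_dg
      by (rule dg_mv_zero[rotated]) (use a0 b0 in auto)
  qed
  interpret L: prob_space L by fact
  interpret Q: prob_space Q by fact
  interpret P: prob_space P2 by fact
  interpret LQ: pair_prob_space L Q ..
  interpret QP: pair_prob_space Q P2 ..
  interpret LQP: pair_prob_space "L \<Otimes>\<^sub>M Q" P2 ..
  define f where "f = (\<lambda>(u::real, z::real^'n). \<xi> + dg a *v (u *\<^sub>R \<delta> + z))"
  define g where "g = (\<lambda>(u::real, w::real^'n). (\<xi> + \<mu>) + dg b *v (u *\<^sub>R \<delta>Y + w))"
  have mf: "f \<in> borel_measurable (L \<Otimes>\<^sub>M Q)"
    unfolding measurable_cong_sets[OF sets_pair_measure_cong[OF sL sQ] refl] f_def by measurable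
  have mh: "h \<in> borel_measurable (Q \<Otimes>\<^sub>M P2)"
    unfolding measurable_cong_sets[OF sets_pair_measure_cong[OF sQ sP] refl] h_def by measurable
  have pQ': "prob_space Q'" unfolding Q'_def by (rule QP.P.prob_space_distr[OF mh])
  have sQ': "sets Q' = sets borel" unfolding Q'_def by simp
  have mg: "g \<in> borel_measurable (L \<Otimes>\<^sub>M Q')"
    unfolding measurable_cong_sets[OF sets_pair_measure_cong[OF sL sQ'] refl] g_def by measurable
  have idP: "distr P2 borel (\<lambda>x. x) = P2" by (rule distr_id2) (simp add: sP)
  have massoc: "(\<lambda>((x,y),z). (x,(y,z))) \<in> measurable ((L \<Otimes>\<^sub>M Q) \<Otimes>\<^sub>M P2) (L \<Otimes>\<^sub>M (Q \<Otimes>\<^sub>M P2))"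
  proof -
    have e: "(\<lambda>((x::real,y::real^'n),z::real^'n). (x,(y,z))) = (\<lambda>p. (fst (fst p), (snd (fst p), snd p)))" by auto
    show ?thesis unfolding e by measurable
  qed
  have mid: "(\<lambda>(u, w). (u, h w)) \<in> measurable (L \<Otimes>\<^sub>M (Q \<Otimes>\<^sub>M P2)) (L \<Otimes>\<^sub>M Q')"
  proof -
    have e: "(\<lambda>(u::real, w). (u, h w)) = (\<lambda>p. (fst p, h (snd p)))" by auto
    have mh': "h \<in> measurable (Q \<Otimes>\<^sub>M P2) Q'"
      using mh by (simp add: measurable_cong_sets[OF refl sQ'])
    show ?thesis unfolding e using mh' by measurable
  qed
  have mgh: "(\<lambda>(u, w). g (u, h w)) \<in> borel_measurable (L \<Otimes>\<^sub>M (Q \<Otimes>\<^sub>M P2))"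
  proof -
    have "g \<circ> (\<lambda>(u, w). (u, h w)) \<in> borel_measurable (L \<Otimes>\<^sub>M (Q \<Otimes>\<^sub>M P2))"
      by (rule measurable_comp[OF mid mg])
    moreover have "g \<circ> (\<lambda>(u, w). (u, h w)) = (\<lambda>(u, w). g (u, h w))" by auto
    ultimately show ?thesis by simp
  qed
  have ind: "distr M borel Y1 \<Otimes>\<^sub>M distr M borel Y2 = distr M (borel \<Otimes>\<^sub>M borel) (\<lambda>x. (Y1 x, Y2 x))"
    using assms(5) M.indep_var_distribution_eq by blast
  have mplus: "(\<lambda>(x::real^'n, y). x + y) \<in> borel_measurable (borel \<Otimes>\<^sub>M borel)" by measurable
  have "distr M borel (\<lambda>x. Y1 x + Y2 x) = distr (distr M (borel \<Otimes>\<^sub>M borel) (\<lambda>x. (Y1 x, Y2 x))) borel (\<lambda>(x, y). x + y)"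
    using mY1 mY2 mplus by (subst distr_distr) (auto simp: o_def)
  also have "\<dots> = distr (distr (L \<Otimes>\<^sub>M Q) borel f \<Otimes>\<^sub>M distr P2 borel (\<lambda>x. x)) borel (\<lambda>(x, y). x + y)"
    unfolding idP unfolding P2_def ind[symmetric] eY1 om f_def ..
  also have "\<dots> = distr (distr ((L \<Otimes>\<^sub>M Q) \<Otimes>\<^sub>M P2) (borel \<Otimes>\<^sub>M borel) (\<lambda>(x, y). (f x, y))) borel (\<lambda>(x, y). x + y)"
    by (subst pair_measure_distr[OF mf]) (auto simp: idP P.sigma_finite_measure_axioms measurable_ident_sets[OF sP])
  also have "\<dots> = distr ((L \<Otimes>\<^sub>M Q) \<Otimes>\<^sub>M P2) borel (\<lambda>((u, z), y). f (u, z) + y)"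
  proof (subst distr_distr)
    show "(\<lambda>(x, y). (f x, y)) \<in> (L \<Otimes>\<^sub>M Q) \<Otimes>\<^sub>M P2 \<rightarrow>\<^sub>M borel \<Otimes>\<^sub>M borel"
      using mf sP by measurable
  qed (use mplus in \<open>auto intro!: distr_cong\<close>)
  also have "\<dots> = distr ((L \<Otimes>\<^sub>M Q) \<Otimes>\<^sub>M P2) borel (\<lambda>((u, z), y). g (u, h (z, y)))"
    by (rule distr_cong) (auto simp: f_def g_def h_def K_def D_def c_def \<delta>Y_def om omY ib vec_eq_iff field_simps)
  also have "\<dots> = distr (distr ((L \<Otimes>\<^sub>M Q) \<Otimes>\<^sub>M P2) (L \<Otimes>\<^sub>M (Q \<Otimes>\<^sub>M P2)) (\<lambda>((x,y),z). (x,(y,z)))) borel (\<lambda>(u, w). g (u, h w))"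
    using massoc mgh by (subst distr_distr) (auto intro!: distr_cong)
  also have "\<dots> = distr (L \<Otimes>\<^sub>M (Q \<Otimes>\<^sub>M P2)) borel (\<lambda>(u, w). g (u, h w))"
    by (subst pair_measure_assoc) (auto simp: L.sigma_finite_measure_axioms Q.sigma_finite_measure_axioms P.sigma_finite_measure_axioms)
  also have "\<dots> = distr (distr (L \<Otimes>\<^sub>M (Q \<Otimes>\<^sub>M P2)) (L \<Otimes>\<^sub>M Q') (\<lambda>(u, w). (u, h w))) borel g"
    using mid mg by (subst distr_distr) (auto intro!: distr_cong)
  also have "\<dots> = distr (L \<Otimes>\<^sub>M Q') borel g"
  proof -
    have sfQ': "sigma_finite_measure (distr (Q \<Otimes>\<^sub>M P2) borel h)"
      using pQ' unfolding Q'_def by (simp add: prob_space_imp_sigma_finite)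
    have "L \<Otimes>\<^sub>M Q' = distr L L (\<lambda>x. x) \<Otimes>\<^sub>M distr (Q \<Otimes>\<^sub>M P2) borel h"
      by (simp add: Q'_def)
    also have "\<dots> = distr (L \<Otimes>\<^sub>M (Q \<Otimes>\<^sub>M P2)) (L \<Otimes>\<^sub>M borel) (\<lambda>(x, y). (x, h y))"
      by (rule pair_measure_distr[OF _ mh sfQ']) simp
    also have "\<dots> = distr (L \<Otimes>\<^sub>M (Q \<Otimes>\<^sub>M P2)) (L \<Otimes>\<^sub>M Q') (\<lambda>(x, y). (x, h y))"
      by (rule distr_cong) (auto simp: sets_pair_measure_cong[OF refl sQ'])
    finally show ?thesis by simp
  qed
  finally have eq: "distr M borel (\<lambda>x. Y1 x + Y2 x) = distr (L \<Otimes>\<^sub>M Q') borel g" .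
  show ?thesis
    unfolding is_MMN_def \<delta>Y_def[symmetric]
    using pdOS pdC2 mY1 mY2 pL sL cL gQ' eq by (auto simp: g_def omY)
qed


end
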